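(* Let $U=\{1,\dots,N\}$ be a finite population with auxiliary vectors $\bm{x}_i\in\mathbb{R}^p$, $i\in U$. Let $k$ be the reproducing kernel associated with the energy distance, so that for any probability measures $P,Q$ on $\mathbb{R}^p$ with finite first moment, \[ \mathcal{E}(P,Q)=\mathrm{MMD}_k^2(P,Q)=\|\mu_P-\mu_Q\|_{\mathcal{H}_k}^2, \] where $\mathcal{H}_k$ is the reproducing kernel Hilbert space of $k$ and $\mu_P=E_{\bm{X}\sim P}[k(\bm{X},\cdot)]\in\mathcal{H}_k$ is the kernel mean embedding. Let $f\in\mathcal{H}_k$, define $y_i=f(\bm{x}_i)$ for $i\in U$, and let \[ \hat Y=\frac{N}{n}\sum_{i\in S} y_i,\qquad Y=\sum_{i\in U}y_i. \] Then for any sampling design producing a random sample $S\subset U$ of fixed size $n$, \[ E\big[(\hat Y-Y)^2\big]\le N^2\,\|f\|_{\mathcal{H}_k}^2\,E\big[\mathcal{E}(F_S,F_U)\big], \] where the expectations are with respect to the sampling design.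
   Context: For a subset $s\subset U$ of size $n$, $F_s=\frac1n\sum_{i\in s}\delta_{\bm{x}_i}$ and $F_U=\frac1N\sum_{i\in U}\delta_{\bm{x}_i}$ are the empirical distributions of the auxiliary vectors in $s$ and in $U$, where $\delta_{\bm{x}}$ is the Dirac measure at $\bm{x}$. The energy distance between distributions $P$ and $Q$ is $\mathcal{E}(P,Q)=2E\|\bm{X}-\bm{Z}\|-E\|\bm{X}-\bm{X}'\|-E\|\bm{Z}-\bm{Z}'\|$, where $\bm{X},\bm{X}'\sim P$ and $\bm{Z},\bm{Z}'\sim Q$ are independent and $\|\cdot\|$ is the Euclidean norm. *)

theory Defs
  imports "HOL-Analysis.Analysis" "HOL-Probability.Probability"
begin

definition empirical :: "(nat \<Rightarrow> 'a) \<Rightarrow> nat set \<Rightarrow> 'a pmf" where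
  "empirical x s = map_pmf x (pmf_of_set s)"

definition energy_dist :: "'a::real_normed_vector pmf \<Rightarrow> 'a pmf \<Rightarrow> real" where
  "energy_dist P Q =
     2 * measure_pmf.expectation (pair_pmf P Q) (\<lambda>(x, z). norm (x - z))
     - measure_pmf.expectation (pair_pmf P P) (\<lambda>(x, x'). norm (x - x'))
     - measure_pmf.expectation (pair_pmf Q Q) (\<lambda>(z, z'). norm (z - z'))"

definition energy_kernel :: "'a::real_normed_vector \<Rightarrow> 'a \<Rightarrow> 'a \<Rightarrow> real" where
  "energy_kernel x0 x y = norm (x - x0) + norm (y - x0) - norm (x - y)"

text \<open>An element h of H
  is identified with the function (\<lambda>x. h \<bullet> phi x).\<close>
definition is_rkhs :: "('a \<Rightarrow> 'a \<Rightarrow> real) \<Rightarrow> ('a \<Rightarrow> 'h::{real_inner,complete_space}) \<Rightarrow> bool" where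
  "is_rkhs k phi \<longleftrightarrow> (\<forall>x y. phi x \<bullet> phi y = k x y) \<and> closure (span (range phi)) = UNIV"

end

theory Submission
  imports Defs
begin

lemma exp_pair_sets:
  assumes A: "finite A" "A \<noteq> {}" and B: "finite B" "B \<noteq> {}"
  shows "measure_pmf.expectation (pair_pmf (pmf_of_set A) (pmf_of_set B)) g
       = (\<Sum>i\<in>A. \<Sum>j\<in>B. g (i, j)) / (real (card A) * real (card B))"
proof -
  have "measure_pmf.expectation (pair_pmf (pmf_of_set A) (pmf_of_set B)) g
      = (\<Sum>p\<in>A \<times> B. g p * pmf (pair_pmf (pmf_of_set A) (pmf_of_set B)) p)"
    by (rule integral_measure_pmf_real) (use A B in auto)
  also have "\<dots> = (\<Sum>p\<in>A \<times> B. g p / (real (card A) * real (card B)))"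
    by (rule sum.cong) (use A B in \<open>auto simp: pmf_pair pmf_of_set[OF A(2,1)] pmf_of_set[OF B(2,1)]\<close>)
  also have "\<dots> = (\<Sum>i\<in>A. \<Sum>j\<in>B. g (i, j)) / (real (card A) * real (card B))"
    by (simp add: sum.cartesian_product sum_divide_distrib)
  finally show ?thesis .
qed

lemma exp_emp:
  assumes A: "finite A" "A \<noteq> {}" and B: "finite B" "B \<noteq> {}"
  shows "measure_pmf.expectation (pair_pmf (empirical x A) (empirical x B)) (\<lambda>(u, v). norm (u - v))
       = (\<Sum>i\<in>A. \<Sum>j\<in>B. norm (x i - x j)) / (real (card A) * real (card B))"
proof -
  have "pair_pmf (empirical x A) (empirical x B) = map_pmf (\<lambda>(a, b). (x a, x b)) (pair_pmf (pmf_of_set A) (pmf_of_set B))"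
    unfolding empirical_def by (simp add: map_pair)
  then show ?thesis using exp_pair_sets[OF A B] by (simp add: case_prod_unfold)
qed

lemma inner_m:
  fixes phi :: "'a::real_normed_vector \<Rightarrow> 'h::{real_inner,complete_space}"
  assumes rk: "is_rkhs (energy_kernel x0) phi"
    and A: "finite A" "A \<noteq> {}" and B: "finite B" "B \<noteq> {}"
  shows "((1 / real (card A)) *\<^sub>R (\<Sum>i\<in>A. phi (x i))) \<bullet> ((1 / real (card B)) *\<^sub>R (\<Sum>j\<in>B. phi (x j)))
     = (\<Sum>i\<in>A. norm (x i - x0)) / real (card A) + (\<Sum>j\<in>B. norm (x j - x0)) / real (card B)
       - (\<Sum>i\<in>A. \<Sum>j\<in>B. norm (x i - x j)) / (real (card A) * real (card B))"
proof -
  have k: "phi u \<bullet> phi v = norm (u - x0) + norm (v - x0) - norm (u - v)" for u v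
    using rk by (simp add: is_rkhs_def energy_kernel_def)
  have cA: "real (card A) > 0" and cB: "real (card B) > 0" using A B by (auto simp: card_gt_0_iff)
  have "((1 / real (card A)) *\<^sub>R (\<Sum>i\<in>A. phi (x i))) \<bullet> ((1 / real (card B)) *\<^sub>R (\<Sum>j\<in>B. phi (x j)))
     = (\<Sum>i\<in>A. \<Sum>j\<in>B. norm (x i - x0) + norm (x j - x0) - norm (x i - x j)) / (real (card A) * real (card B))"
    by (simp add: inner_sum_left inner_sum_right k sum_divide_distrib sum.swap[of _ B])
  also have "(\<Sum>i\<in>A. \<Sum>j\<in>B. norm (x i - x0) + norm (x j - x0) - norm (x i - x j))
      = real (card B) * (\<Sum>i\<in>A. norm (x i - x0)) + real (card A) * (\<Sum>j\<in>B. norm (x j - x0))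
        - (\<Sum>i\<in>A. \<Sum>j\<in>B. norm (x i - x j))"
    by (simp add: sum.distrib sum_subtractf sum_distrib_left mult.commute)
  also have "(real (card B) * (\<Sum>i\<in>A. norm (x i - x0)) + real (card A) * (\<Sum>j\<in>B. norm (x j - x0))
        - (\<Sum>i\<in>A. \<Sum>j\<in>B. norm (x i - x j))) / (real (card A) * real (card B))
     = (\<Sum>i\<in>A. norm (x i - x0)) / real (card A) + (\<Sum>j\<in>B. norm (x j - x0)) / real (card B)
       - (\<Sum>i\<in>A. \<Sum>j\<in>B. norm (x i - x j)) / (real (card A) * real (card B))"
    using cA cB by (simp add: field_simps)
  finally show ?thesis .
qed

theorem proposition1:
  fixes N n :: nat
    and x :: "nat \<Rightarrow> real ^ 'p"
    and x0 :: "real ^ 'p"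
    and phi :: "real ^ 'p \<Rightarrow> 'h::{real_inner,complete_space}"
    and h :: 'h
    and y :: "nat \<Rightarrow> real"
    and design :: "nat set pmf"
  assumes rkhs: "is_rkhs (energy_kernel x0) phi"
    and y_def: "\<And>i. y i = h \<bullet> phi (x i)"
    and n_pos: "1 \<le> n"
    and design: "set_pmf design \<subseteq> {s. s \<subseteq> {1..N} \<and> card s = n}"
  shows "measure_pmf.expectation design
           (\<lambda>S. (real N / real n * (\<Sum>i\<in>S. y i) - (\<Sum>i\<in>{1..N}. y i))\<^sup>2)
         \<le> (real N)\<^sup>2 * (norm h)\<^sup>2 *
           measure_pmf.expectation design
             (\<lambda>S. energy_dist (empirical x S) (empirical x {1..N}))"
proof -
  define U where "U = {1..N}"
  define m where "m A = (1 / real (card A)) *\<^sub>R (\<Sum>i\<in>A. phi (x i))" for A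
  have pw: "(real N / real n * (\<Sum>i\<in>S. y i) - (\<Sum>i\<in>{1..N}. y i))\<^sup>2
         \<le> (real N)\<^sup>2 * (norm h)\<^sup>2 * energy_dist (empirical x S) (empirical x {1..N})"
    if S: "S \<in> set_pmf design" for S
  proof -
    have Ssub: "S \<subseteq> U" and cS: "card S = n" using S design by (auto simp: U_def)
    have fU: "finite U" by (simp add: U_def)
    have fS: "finite S" using Ssub fU finite_subset by blast
    have neS: "S \<noteq> {}" using cS n_pos by auto
    have neU: "U \<noteq> {}" using Ssub neS by auto
    have cU: "card U = N" by (simp add: U_def)
    have Npos: "real N > 0" using fU neU cU card_gt_0_iff by fastforce
    have npos: "real n > 0" using n_pos by simp
    have sw: "(\<Sum>j\<in>S. \<Sum>i\<in>U. norm (x i - x j)) = (\<Sum>i\<in>S. \<Sum>j\<in>U. norm (x i - x j))"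
      by (rule sum.cong[OF refl], rule sum.cong[OF refl], rule norm_minus_commute)
    have e1: "m A \<bullet> m B = (\<Sum>i\<in>A. norm (x i - x0)) / real (card A) + (\<Sum>j\<in>B. norm (x j - x0)) / real (card B)
       - (\<Sum>i\<in>A. \<Sum>j\<in>B. norm (x i - x j)) / (real (card A) * real (card B))"
      if "A \<in> {S, U}" "B \<in> {S, U}" for A B
    proof -
      have "finite A" "A \<noteq> {}" "finite B" "B \<noteq> {}" using that fS neS fU neU by auto
      then show ?thesis unfolding m_def by (rule inner_m[OF rkhs])
    qed
    have dsw: "(\<Sum>i\<in>U. \<Sum>j\<in>S. norm (x i - x j)) / (real (card U) * real (card S))
        = (\<Sum>i\<in>S. \<Sum>j\<in>U. norm (x i - x j)) / (real (card S) * real (card U))"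
      by (subst sum.swap, subst sw, simp only: mult.commute)
    have ED: "energy_dist (empirical x S) (empirical x U) = (norm (m S - m U))\<^sup>2"
      unfolding energy_dist_def power2_norm_eq_inner inner_diff_left inner_diff_right
      using exp_emp[OF fS neS fU neU, of x] exp_emp[OF fS neS fS neS, of x] exp_emp[OF fU neU fU neU, of x]
        e1[of S S] e1[of S U] e1[of U S] e1[of U U] dsw
      by simp
    have hm: "h \<bullet> m A = (\<Sum>i\<in>A. y i) / real (card A)" for A
      by (simp add: m_def inner_sum_right y_def)
    have "real N / real n * (\<Sum>i\<in>S. y i) - (\<Sum>i\<in>{1..N}. y i) = real N * (h \<bullet> (m S - m U))"
      using Npos npos by (simp add: inner_diff_right hm cS cU field_simps U_def)
    also have "(real N * (h \<bullet> (m S - m U)))\<^sup>2 = (real N)\<^sup>2 * \<bar>h \<bullet> (m S - m U)\<bar>\<^sup>2"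
      by (simp add: power_mult_distrib)
    also have "\<dots> \<le> (real N)\<^sup>2 * (norm h * norm (m S - m U))\<^sup>2"
      by (intro mult_left_mono power_mono Cauchy_Schwarz_ineq2) auto
    also have "\<dots> = (real N)\<^sup>2 * (norm h)\<^sup>2 * energy_dist (empirical x S) (empirical x {1..N})"
      using ED by (simp add: U_def power_mult_distrib)
    finally show ?thesis .
  qed
  have fin: "finite (set_pmf design)"
    using design by (rule finite_subset) (simp add: U_def)
  have AE: "AE S in measure_pmf design. (real N / real n * (\<Sum>i\<in>S. y i) - (\<Sum>i\<in>{1..N}. y i))\<^sup>2
         \<le> (real N)\<^sup>2 * (norm h)\<^sup>2 * energy_dist (empirical x S) (empirical x {1..N})"
    by (rule AE_pmfI) (rule pw)
  have "measure_pmf.expectation design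
           (\<lambda>S. (real N / real n * (\<Sum>i\<in>S. y i) - (\<Sum>i\<in>{1..N}. y i))\<^sup>2)
         \<le> measure_pmf.expectation design
             (\<lambda>S. (real N)\<^sup>2 * (norm h)\<^sup>2 * energy_dist (empirical x S) (empirical x {1..N}))"
    by (rule integral_mono_AE[OF _ _ AE]) (rule integrable_measure_pmf_finite[OF fin])+
  also have "\<dots> = (real N)\<^sup>2 * (norm h)\<^sup>2 *
           measure_pmf.expectation design
             (\<lambda>S. energy_dist (empirical x S) (empirical x {1..N}))"
    by simp
  finally show ?thesis .
qed

end
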